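(* The bilinear form $\langle\cdot,\cdot\rangle:V_\lambda^*\times V_\lambda\to\mathbb Q(s)$ defined on basis elements by $\langle\mathbb T_1^*,\mathbb T_2\rangle=0$ for $\mathbb T_1\ne\mathbb T_2$ and $\langle\mathbb T^*,\mathbb T\rangle=\nu(\mathbb T)$, and extended by linearity, satisfies $\langle P^*T_i^*,QT_i\rangle=\langle P^*,Q\rangle$ for all $P^*\in V_\lambda^*$, $Q\in V_\lambda$ and $1\le i\le N-1$.
   Context: $N\ge2$, $s$ an indeterminate. $\mathcal H_N(s)$ is generated by $T_1,\dots,T_{N-1}$ with $(T_i+1)(T_i-s)=0$, $T_iT_{i+1}T_i=T_{i+1}T_iT_{i+1}$, $T_iT_j=T_jT_i$ ($|i-j|>1$); modules are right modules. $\lambda$ is a partition of $N$ (French convention, rows numbered bottom to top); $\mathrm{Tab}_\lambda$ = reverse standard tableaux (bijective fillings by $1,\dots,N$ strictly decreasing left to right in rows and bottom to top in columns); $\mathrm{CT}_{\mathbb T}[i]$ = column minus row of the cell of $i$; $\mathbb T^{(i,j)}$ exchanges $i,j$. $V_\lambda$ has basis $\mathrm{Tab}_\lambda$, right action $\mathbb TT_i=s\mathbb T$ if $i,i+1$ share a row, $-\mathbb T$ if they share a column, and if $i$ is in a higher row than $i+1$, with $m=\mathrm{CT}_{\mathbb T}[i+1]-\mathrm{CT}_{\mathbb T}[i]>0$, $\mathbb TT_i=\frac{s-1}{1-s^m}\mathbb T+\frac{s(1-s^{m+1})(1-s^{m-1})}{(1-s^m)^2}\mathbb T^{(i,i+1)}$;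 remaining case determined by this formula for $\mathbb T^{(i,i+1)}$ and the quadratic relation. $V_\lambda^*$ is the analogous module of $\mathcal H_N(s^{-1})$ (all formulas with $s$ replaced by $s^{-1}$), with basis $\{\mathbb T^*:\mathbb T\in\mathrm{Tab}_\lambda\}$ and generators acting as $T_i^*$. $\nu(\mathbb T):=\prod\frac{(1-s^{\mathrm{CT}_{\mathbb T}[j]-\mathrm{CT}_{\mathbb T}[i]-1})(1-s^{\mathrm{CT}_{\mathbb T}[j]-\mathrm{CT}_{\mathbb T}[i]+1})}{(1-s^{\mathrm{CT}_{\mathbb T}[j]-\mathrm{CT}_{\mathbb T}[i]})^2}$, the product over pairs $1\le i<j\le N$ with $\mathrm{CT}_{\mathbb T}[i]-\mathrm{CT}_{\mathbb T}[j]\le-2$. *)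

theory Defs
  imports Main "HOL-Computational_Algebra.Polynomial" "HOL-Computational_Algebra.Fraction_Field"
begin

type_synonym ratfun = "rat poly fract"

definition s_ind :: ratfun where
  "s_ind = Fract [:0, 1:] 1"

(* A partition of N: a list of positive, weakly decreasing parts summing to N.
   Row r (0-based, counted from the bottom, French convention) has length lam ! r. *)
definition is_partition :: "nat list \<Rightarrow> nat \<Rightarrow> bool" where
  "is_partition lam N \<longleftrightarrow> sorted_wrt (\<ge>) lam \<and> (\<forall>x\<in>set lam. 0 < x) \<and> sum_list lam = N"

definition cells :: "nat list \<Rightarrow> (nat \<times> nat) set" where
  "cells lam = {(r, c). r < length lam \<and> c < lam ! r}"

(* A filling assigns to each cell a number; value 0 outside the diagram (extensionality). *)
type_synonym tableau = "nat \<times> nat \<Rightarrow> nat"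

definition Tab :: "nat list \<Rightarrow> tableau set" where
  "Tab lam = {T. bij_betw T (cells lam) {1..sum_list lam}
      \<and> (\<forall>x. x \<notin> cells lam \<longrightarrow> T x = 0)
      \<and> (\<forall>r c. (r, c + 1) \<in> cells lam \<longrightarrow> T (r, c + 1) < T (r, c))
      \<and> (\<forall>r c. (r + 1, c) \<in> cells lam \<longrightarrow> T (r + 1, c) < T (r, c))}"

definition pos :: "nat list \<Rightarrow> tableau \<Rightarrow> nat \<Rightarrow> nat \<times> nat" where
  "pos lam T i = (THE x. x \<in> cells lam \<and> T x = i)"

definition rw :: "nat list \<Rightarrow> tableau \<Rightarrow> nat \<Rightarrow> nat" where
  "rw lam T i = fst (pos lam T i)"

definition cl :: "nat list \<Rightarrow> tableau \<Rightarrow> nat \<Rightarrow> nat" where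
  "cl lam T i = snd (pos lam T i)"

definition CT :: "nat list \<Rightarrow> tableau \<Rightarrow> nat \<Rightarrow> int" where
  "CT lam T i = int (cl lam T i) - int (rw lam T i)"

definition swp :: "tableau \<Rightarrow> nat \<Rightarrow> nat \<Rightarrow> tableau" where
  "swp T i j = (\<lambda>x. if T x = i then j else if T x = j then i else T x)"

(* Coefficient of the basis vector T' in  T \<cdot> T_i, for the module with parameter q
   (q = s gives V_lambda, q = s^{-1} gives V_lambda^* ).
   The last case (i in a lower row than i+1) is the one "determined by the formula
   for T^{(i,i+1)} and the quadratic relation"; solving gives
   T T_i = T^{(i,i+1)} + (q - 1 - (q-1)/(1-q^m)) T  with m = CT_T[i] - CT_T[i+1]. *)
definition hcoeff :: "ratfun \<Rightarrow> nat list \<Rightarrow> nat \<Rightarrow> tableau \<Rightarrow> tableau \<Rightarrow> ratfun" where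
  "hcoeff q lam i T T' =
     (if rw lam T i = rw lam T (i + 1) then (if T' = T then q else 0)
      else if cl lam T i = cl lam T (i + 1) then (if T' = T then -1 else 0)
      else if rw lam T i > rw lam T (i + 1) then
        (let m = CT lam T (i + 1) - CT lam T i in
          if T' = T then (q - 1) / (1 - q powi m)
          else if T' = swp T i (i + 1) then
            q * (1 - q powi (m + 1)) * (1 - q powi (m - 1)) / (1 - q powi m)\<^sup>2
          else 0)
      else
        (let m = CT lam T i - CT lam T (i + 1) in
          if T' = T then q - 1 - (q - 1) / (1 - q powi m)
          else if T' = swp T i (i + 1) then 1
          else 0))"

(* Vectors of V_lambda (resp. V_lambda^* ) are coordinate functions on Tab lam.
   Right action of the generator T_i, extended linearly. *)
definition act :: "ratfun \<Rightarrow> nat list \<Rightarrow> nat \<Rightarrow> (tableau \<Rightarrow> ratfun) \<Rightarrow> (tableau \<Rightarrow> ratfun)" where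
  "act q lam i v = (\<lambda>T'. \<Sum>T\<in>Tab lam. v T * hcoeff q lam i T T')"

definition nu :: "nat list \<Rightarrow> tableau \<Rightarrow> ratfun" where
  "nu lam T = (\<Prod>(i, j) \<in> {(i, j). 1 \<le> i \<and> i < j \<and> j \<le> sum_list lam
                                  \<and> CT lam T i - CT lam T j \<le> -2}.
     (let d = CT lam T j - CT lam T i in
       (1 - s_ind powi (d - 1)) * (1 - s_ind powi (d + 1)) / (1 - s_ind powi d)\<^sup>2))"

definition pairing :: "nat list \<Rightarrow> (tableau \<Rightarrow> ratfun) \<Rightarrow> (tableau \<Rightarrow> ratfun) \<Rightarrow> ratfun" where
  "pairing lam P Q = (\<Sum>T\<in>Tab lam. P T * Q T * nu lam T)"

end

theory Submission
  imports Defs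
begin


lemma cells_finite: "finite (cells lam)"
proof -
  have "cells lam \<subseteq> {..<length lam} \<times> {..<sum_list lam + 1}"
  proof
    fix x assume "x \<in> cells lam"
    then obtain r c where x: "x = (r,c)" "r < length lam" "c < lam ! r" by (auto simp: cells_def)
    have "lam ! r \<le> sum_list lam" using x(2) elem_le_sum_list by blast
    then show "x \<in> {..<length lam} \<times> {..<sum_list lam + 1}" using x by auto
  qed
  then show ?thesis by (rule finite_subset) auto
qed

lemma Tab_finite: "finite (Tab lam)"
proof -
  have "Tab lam \<subseteq> {f. \<forall>x. (x \<in> cells lam \<longrightarrow> f x \<in> {1..sum_list lam}) \<and> (x \<notin> cells lam \<longrightarrow> f x = 0)}"
    by (auto simp: Tab_def bij_betw_def)
  then show ?thesis
    by (rule finite_subset) (intro finite_set_of_finite_funs cells_finite finite_atLeastAtMost)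
qed

lemma pos_prop:
  assumes "T \<in> Tab lam" "v \<in> {1..sum_list lam}"
  shows "pos lam T v \<in> cells lam \<and> T (pos lam T v) = v"
proof -
  have b: "bij_betw T (cells lam) {1..sum_list lam}" using assms(1) by (simp add: Tab_def)
  have "v \<in> T ` cells lam" using b assms(2) by (simp add: bij_betw_def)
  then obtain x where x: "x \<in> cells lam" "T x = v" by blast
  have "\<exists>!x. x \<in> cells lam \<and> T x = v"
    using x b unfolding bij_betw_def inj_on_def by blast
  then show ?thesis unfolding pos_def by (rule theI')
qed

lemma pos_uniq:
  assumes "T \<in> Tab lam" "x \<in> cells lam"
  shows "pos lam T (T x) = x"
proof -
  have b: "bij_betw T (cells lam) {1..sum_list lam}" using assms(1) by (simp add: Tab_def)
  have "\<exists>!y. y \<in> cells lam \<and> T y = T x"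
    using assms b unfolding bij_betw_def inj_on_def by blast
  then show ?thesis unfolding pos_def using assms(2) by (simp add: the1_equality)
qed

definition tau :: "nat \<Rightarrow> nat \<Rightarrow> nat" where
  "tau i a = (if a = i then i + 1 else if a = i + 1 then i else a)"

lemma pos_swp: "pos lam (swp T i (i+1)) a = pos lam T (tau i a)"
proof -
  have "\<And>x. (swp T i (i+1) x = a) = (T x = tau i a)"
    by (auto simp: swp_def tau_def)
  then show ?thesis unfolding pos_def by simp
qed

lemma rw_swp: "rw lam (swp T i (i+1)) a = rw lam T (tau i a)"
  unfolding rw_def pos_swp ..
lemma cl_swp: "cl lam (swp T i (i+1)) a = cl lam T (tau i a)"
  unfolding cl_def pos_swp ..
lemma CT_swp: "CT lam (swp T i (i+1)) a = CT lam T (tau i a)"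
  unfolding CT_def rw_swp cl_swp ..

lemma tau_simps [simp]: "tau i i = i + 1" "tau i (i+1) = i"
  by (auto simp: tau_def)

lemma swp_swp [simp]: "swp (swp T i (i+1)) i (i+1) = T"
  by (auto simp: swp_def fun_eq_iff)

lemma swp_ne:
  assumes "T \<in> Tab lam" "1 \<le> i" "i + 1 \<le> sum_list lam"
  shows "swp T i (i+1) \<noteq> T"
proof
  assume e: "swp T i (i+1) = T"
  have "T (pos lam T i) = i" using pos_prop[OF assms(1), of i] assms by auto
  then have "swp T i (i+1) (pos lam T i) = i + 1" by (simp add: swp_def)
  with e \<open>T (pos lam T i) = i\<close> show False by simp
qed

lemma tau_mono: "a < b \<Longrightarrow> \<not> (a = i \<and> b = i + 1) \<Longrightarrow> tau i a < tau i b"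
  by (auto simp: tau_def)

lemma swp_tau: "swp T i (i+1) = (\<lambda>x. tau i (T x))"
  by (auto simp: swp_def tau_def fun_eq_iff)

lemma swp_Tab:
  assumes T: "T \<in> Tab lam" and i: "1 \<le> i" "i + 1 \<le> sum_list lam"
    and r: "rw lam T i \<noteq> rw lam T (i+1)" and c: "cl lam T i \<noteq> cl lam T (i+1)"
  shows "swp T i (i+1) \<in> Tab lam"
proof -
  let ?N = "sum_list lam"
  have b: "bij_betw T (cells lam) {1..?N}" using T by (simp add: Tab_def)
  have bt: "bij_betw (tau i) {1..?N} {1..?N}"
  proof -
    have "tau i ` {1..?N} = {1..?N}"
    proof -
      have "tau i ` {1..?N} \<subseteq> {1..?N}" using i by (auto simp: tau_def)
      moreover have "{1..?N} \<subseteq> tau i ` {1..?N}"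
      proof
        fix y assume "y \<in> {1..?N}"
        then have "tau i (tau i y) = y" "tau i y \<in> {1..?N}" using i by (auto simp: tau_def)
        then show "y \<in> tau i ` {1..?N}" by (metis imageI)
      qed
      ultimately show ?thesis by blast
    qed
    moreover have "inj_on (tau i) {1..?N}" by (auto simp: inj_on_def tau_def split: if_splits)
    ultimately show ?thesis by (simp add: bij_betw_def)
  qed
  have b2: "bij_betw (swp T i (i+1)) (cells lam) {1..?N}"
    unfolding swp_tau using bij_betw_trans[OF b bt] by (simp add: comp_def)
  have z: "\<forall>x. x \<notin> cells lam \<longrightarrow> swp T i (i+1) x = 0"
    using T i by (auto simp: Tab_def swp_def)
  have key: "tau i (T y) < tau i (T x)" if xy: "x \<in> cells lam" "y \<in> cells lam" "T y < T x"
     and adj: "fst x = fst y \<or> snd x = snd y" for x y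
  proof (rule tau_mono[OF xy(3)])
    show "\<not> (T y = i \<and> T x = i + 1)"
    proof
      assume h: "T y = i \<and> T x = i + 1"
      have "pos lam T i = y" "pos lam T (i+1) = x" using pos_uniq[OF T] xy h by metis+
      then show False using adj r c by (auto simp: rw_def cl_def)
    qed
  qed
  have m1: "\<forall>r c'. (r, c' + 1) \<in> cells lam \<longrightarrow> swp T i (i+1) (r, c' + 1) < swp T i (i+1) (r, c')"
  proof (intro allI impI)
    fix r c' assume h: "(r, c' + 1) \<in> cells lam"
    then have "(r, c') \<in> cells lam" by (auto simp: cells_def)
    moreover have "T (r, c'+1) < T (r, c')" using T h by (auto simp: Tab_def)
    ultimately show "swp T i (i+1) (r, c' + 1) < swp T i (i+1) (r, c')"
      unfolding swp_tau using key[of "(r,c')" "(r,c'+1)"] h by auto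
  qed
  have m2: "\<forall>r c'. (r + 1, c') \<in> cells lam \<longrightarrow> swp T i (i+1) (r + 1, c') < swp T i (i+1) (r, c')"
  proof (intro allI impI)
    fix r c' assume h: "(r + 1, c') \<in> cells lam"
    have "T (r+1, c') < T (r, c')" using T h by (auto simp: Tab_def)
    moreover have "(r, c') \<in> cells lam"
    proof (rule ccontr)
      assume "(r, c') \<notin> cells lam"
      then have "T (r, c') = 0" using T by (auto simp: Tab_def)
      with \<open>T (r+1, c') < T (r, c')\<close> show False by simp
    qed
    ultimately show "swp T i (i+1) (r + 1, c') < swp T i (i+1) (r, c')"
      unfolding swp_tau using key[of "(r,c')" "(r+1,c')"] h by auto
  qed
  show ?thesis using b2 z m1 m2 by (simp add: Tab_def)
qed



lemma row_mono:
  assumes T: "T \<in> Tab lam" and h: "(r, c') \<in> cells lam" "c < c'"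
  shows "T (r, c') < T (r, c)"
  using h
proof (induction c' arbitrary: c)
  case 0 then show ?case by simp
next
  case (Suc k)
  have s1: "T (r, Suc k) < T (r, k)" using T Suc.prems(1) by (auto simp: Tab_def)
  show ?case
  proof (cases "c = k")
    case True then show ?thesis using s1 by simp
  next
    case False
    then have "c < k" using Suc.prems(2) by simp
    moreover have "(r, k) \<in> cells lam" using Suc.prems(1) by (auto simp: cells_def)
    ultimately have "T (r, k) < T (r, c)" using Suc.IH by blast
    then show ?thesis using s1 by simp
  qed
qed

lemma col_mono:
  assumes T: "T \<in> Tab lam" and srt: "sorted_wrt (\<ge>) lam" and h: "(r', c) \<in> cells lam" "r < r'"
  shows "T (r', c) < T (r, c)"
  using h
proof (induction r' arbitrary: r)
  case 0 then show ?case by simp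
next
  case (Suc k)
  have s1: "T (Suc k, c) < T (k, c)" using T Suc.prems(1) by (auto simp: Tab_def)
  show ?case
  proof (cases "r = k")
    case True then show ?thesis using s1 by simp
  next
    case False
    then have "r < k" using Suc.prems(2) by simp
    moreover have "(k, c) \<in> cells lam"
    proof -
      have "Suc k < length lam" "c < lam ! Suc k" using Suc.prems(1) by (auto simp: cells_def)
      moreover have "lam ! Suc k \<le> lam ! k" using sorted_wrt_nth_less[OF srt, of k "Suc k"] calculation by simp
      ultimately show ?thesis by (auto simp: cells_def)
    qed
    ultimately have "T (k, c) < T (r, c)" using Suc.IH by blast
    then show ?thesis using s1 by simp
  qed
qed

lemma m_ge2:
  assumes T: "T \<in> Tab lam" and srt: "sorted_wrt (\<ge>) lam" and i: "1 \<le> i" "i + 1 \<le> sum_list lam"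
    and r: "rw lam T i > rw lam T (i+1)" and c: "cl lam T i \<noteq> cl lam T (i+1)"
  shows "CT lam T (i+1) - CT lam T i \<ge> 2"
proof -
  obtain ri ci where pi: "pos lam T i = (ri, ci)" by force
  obtain rj cj where pj: "pos lam T (i+1) = (rj, cj)" by force
  have ci: "(ri, ci) \<in> cells lam" "T (ri, ci) = i" using pos_prop[OF T, of i] i pi by auto
  have cj: "(rj, cj) \<in> cells lam" "T (rj, cj) = i + 1" using pos_prop[OF T, of "i+1"] i pj by auto
  have rr: "rj < ri" using r pi pj by (simp add: rw_def)
  have cc: "ci \<noteq> cj" using c pi pj by (simp add: cl_def)
  show ?thesis
  proof (cases "ci < cj")
    case True
    then show ?thesis using rr pi pj by (simp add: CT_def rw_def cl_def)
  next
    case False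
    then have lt: "cj < ci" using cc by simp
    have "ri < length lam" "ci < lam ! ri" using ci(1) by (auto simp: cells_def)
    moreover have "lam ! ri \<le> lam ! rj" using sorted_wrt_nth_less[OF srt, of rj ri] rr calculation by simp
    ultimately have cell: "(rj, ci) \<in> cells lam" using rr by (auto simp: cells_def)
    have "T (rj, ci) < T (rj, cj)" using row_mono[OF T cell lt] .
    moreover have "T (ri, ci) < T (rj, ci)" using col_mono[OF T srt ci(1) rr] .
    ultimately show ?thesis using ci cj by simp
  qed
qed

definition Ff :: "int \<Rightarrow> ratfun" where
  "Ff d = (1 - s_ind powi (d - 1)) * (1 - s_ind powi (d + 1)) / (1 - s_ind powi d)\<^sup>2"

definition PS :: "nat \<Rightarrow> (nat \<Rightarrow> int) \<Rightarrow> (nat \<times> nat) set" where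
  "PS N c = {(i, j). 1 \<le> i \<and> i < j \<and> j \<le> N \<and> c i - c j \<le> -2}"

definition nuc :: "nat \<Rightarrow> (nat \<Rightarrow> int) \<Rightarrow> ratfun" where
  "nuc N c = (\<Prod>(a, b) \<in> PS N c. Ff (c b - c a))"

lemma nu_nuc: "nu lam T = nuc (sum_list lam) (CT lam T)"
  unfolding nu_def nuc_def PS_def Ff_def Let_def ..

definition fac :: "nat \<Rightarrow> (nat \<Rightarrow> int) \<Rightarrow> ratfun" where
  "fac i c = (if c i - c (i+1) \<le> -2 then Ff (c (i+1) - c i) else 1)"

lemma PS_finite: "finite (PS N c)"
  by (rule finite_subset[of _ "{..N} \<times> {..N}"]) (auto simp: PS_def)

lemma nuc_split:
  assumes "1 \<le> i" "i + 1 \<le> N"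
  shows "nuc N c = (\<Prod>(a, b) \<in> PS N c - {(i, i+1)}. Ff (c b - c a)) * fac i c"
proof (cases "(i, i+1) \<in> PS N c")
  case True
  then show ?thesis unfolding nuc_def
    using prod.remove[OF PS_finite True, of "\<lambda>(a,b). Ff (c b - c a)"]
    by (simp add: fac_def PS_def mult.commute)
next
  case False
  then have "PS N c - {(i, i+1)} = PS N c" by blast
  moreover have "fac i c = 1" using False assms by (auto simp: fac_def PS_def)
  ultimately show ?thesis unfolding nuc_def by simp
qed

lemma nuc_rest_swap:
  assumes "1 \<le> i" "i + 1 \<le> N"
  shows "(\<Prod>(a, b) \<in> PS N (\<lambda>a. c (tau i a)) - {(i, i+1)}. Ff (c (tau i b) - c (tau i a)))
   = (\<Prod>(a, b) \<in> PS N c - {(i, i+1)}. Ff (c b - c a))"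
  using assms
  by (intro prod.reindex_bij_witness[of _ "\<lambda>(a,b). (tau i a, tau i b)" "\<lambda>(a,b). (tau i a, tau i b)"])
     (auto simp: tau_def PS_def split: prod.splits if_splits)

lemma nu_swap:
  assumes "1 \<le> i" "i + 1 \<le> sum_list lam"
  shows "\<exists>R. nu lam T = R * fac i (CT lam T) \<and> nu lam (swp T i (i+1)) = R * fac i (\<lambda>a. CT lam T (tau i a))"
proof -
  have e: "CT lam (swp T i (i+1)) = (\<lambda>a. CT lam T (tau i a))" by (rule ext, rule CT_swp)
  let ?R = "\<Prod>(a, b) \<in> PS (sum_list lam) (CT lam T) - {(i, i+1)}. Ff (CT lam T b - CT lam T a)"
  have 1: "nu lam T = ?R * fac i (CT lam T)"
    unfolding nu_nuc by (rule nuc_split[OF assms])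
  have 2: "nu lam (swp T i (i+1)) = ?R * fac i (\<lambda>a. CT lam T (tau i a))"
    unfolding nu_nuc e nuc_split[OF assms, of "\<lambda>a. CT lam T (tau i a)"] nuc_rest_swap[OF assms] ..
  show ?thesis using 1 2 by blast
qed



lemma s_pow: "s_ind ^ n = Fract ([:0,1:] ^ n) 1"
  by (induction n) (auto simp: s_ind_def One_fract_def)

lemma s_nz: "s_ind \<noteq> 0"
  by (simp add: s_ind_def Zero_fract_def eq_fract)

lemma s_pow_ne1: "n > 0 \<Longrightarrow> s_ind ^ n \<noteq> 1"
proof
  assume "n > 0" "s_ind ^ n = 1"
  then have "([:0,1:] ^ n :: rat poly) = 1"
    by (simp add: s_pow One_fract_def eq_fract)
  then have "degree ([:0,1:] ^ n :: rat poly) = 0" by simp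
  with \<open>n > 0\<close> show False by (simp add: degree_power_eq)
qed

lemma s_powi_ne1: assumes "(m::int) \<noteq> 0" shows "s_ind powi m \<noteq> 1"
proof (cases "m > 0")
  case True
  then show ?thesis using s_pow_ne1[of "nat m"] by (simp add: power_int_def)
next
  case False
  then have "s_ind ^ nat (-m) \<noteq> 1" using assms s_pow_ne1[of "nat (-m)"] by simp
  then show ?thesis using False assms by (simp add: power_int_def power_inverse)
qed

lemma alg:
  fixes m :: int and R :: ratfun
  assumes m: "m \<ge> 2"
  defines "s \<equiv> s_ind"
  defines "aq \<equiv> \<lambda>q::ratfun. (q - 1) / (1 - q powi m)"
  defines "bq \<equiv> \<lambda>q::ratfun. q * (1 - q powi (m + 1)) * (1 - q powi (m - 1)) / (1 - q powi m)\<^sup>2"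
  defines "dq \<equiv> \<lambda>q::ratfun. q - 1 - (q - 1) / (1 - q powi m)"
  defines "nuU \<equiv> R * ((1 - s powi (m - 1)) * (1 - s powi (m + 1)) / (1 - s powi m)\<^sup>2)"
  shows "aq (inverse s) * aq s * nuU + bq (inverse s) * bq s * R = nuU"
    and "aq (inverse s) * 1 * nuU + bq (inverse s) * dq s * R = 0"
    and "dq (inverse s) * bq s * R + 1 * aq s * nuU = 0"
    and "dq (inverse s) * dq s * R + 1 * 1 * nuU = R"
proof -
  define x where "x = s powi m"
  have s0: "s \<noteq> 0" using s_nz by (simp add: s_def)
  have x0: "x \<noteq> 0" using s0 by (simp add: x_def)
  have x1: "x \<noteq> 1" using s_powi_ne1[of m] m by (simp add: x_def s_def)
  have p1: "s powi (m + 1) = x * s" using s0 by (simp add: x_def power_int_add_1)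
  have p2: "s powi (m - 1) = x * inverse s" using s0 by (simp add: x_def power_int_diff divide_inverse)
  have p3: "\<And>k. inverse s powi k = inverse (s powi k)" by (simp add: power_int_inverse)
  have x1': "1 - x \<noteq> 0" using x1 by simp
  have x2: "1 - inverse x \<noteq> 0" using x1 x0 by (simp add: field_simps)
  have i1: "s * inverse s = 1" "(1-x) * inverse (1-x) = 1" "x * inverse x = 1"
     "(1 - inverse x) * inverse (1 - inverse x) = 1"
    using s0 x1' x0 x2 by auto
  have ii: "inverse (x * s) = inverse x * inverse s" "inverse (x * inverse s) = inverse x * s"
    by (simp_all add: inverse_mult_distrib)
  note U = inverse_inverse_eq aq_def bq_def dq_def nuU_def p3 p1 p2 ii x_def[symmetric] divide_inverse power2_eq_square inverse_mult_distrib
  show "aq (inverse s) * aq s * nuU + bq (inverse s) * bq s * R = nuU"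
    unfolding U using i1 by algebra
  show "aq (inverse s) * 1 * nuU + bq (inverse s) * dq s * R = 0"
    unfolding U using i1 by algebra
  show "dq (inverse s) * bq s * R + 1 * aq s * nuU = 0"
    unfolding U using i1 by algebra
  show "dq (inverse s) * dq s * R + 1 * 1 * nuU = R"
    unfolding U using i1 by algebra
qed



lemma swp_swp' [simp]: "swp (swp T i (Suc i)) i (Suc i) = T"
  by (auto simp: swp_def fun_eq_iff)

lemma tau_Suc [simp]: "tau i (Suc i) = i"
  by (simp add: tau_def)

lemma hc_supp:
  "hcoeff q lam i Y T' \<noteq> 0 \<Longrightarrow> T' = Y \<or> (T' = swp Y i (i+1) \<and> rw lam Y i \<noteq> rw lam Y (i+1) \<and> cl lam Y i \<noteq> cl lam Y (i+1))"
  by (auto simp: hcoeff_def Let_def split: if_splits)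

lemma hc_other:
  assumes "hcoeff q lam i Y X \<noteq> 0" "Y \<noteq> X"
  shows "Y = swp X i (i+1) \<and> rw lam X i \<noteq> rw lam X (i+1) \<and> cl lam X i \<noteq> cl lam X (i+1)"
proof -
  have h: "X = swp Y i (i+1)" "rw lam Y i \<noteq> rw lam Y (i+1)" "cl lam Y i \<noteq> cl lam Y (i+1)"
    using hc_supp[OF assms(1)] assms(2) by auto
  have "Y = swp X i (i+1)" using h(1) by simp
  moreover have "rw lam X i \<noteq> rw lam X (i+1)" "cl lam X i \<noteq> cl lam X (i+1)"
    using h unfolding h(1) rw_swp cl_swp by auto
  ultimately show ?thesis by blast
qed

lemma gram4:
  assumes U: "U \<in> Tab lam" and srt: "sorted_wrt (\<ge>) lam" and i: "1 \<le> i" "i + 1 \<le> sum_list lam"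
    and r: "rw lam U i > rw lam U (i+1)" and c: "cl lam U i \<noteq> cl lam U (i+1)"
  defines "V \<equiv> swp U i (i+1)"
  defines "hs \<equiv> hcoeff s_ind lam i" and "hi \<equiv> hcoeff (inverse s_ind) lam i"
  shows "hi U U * hs U U * nu lam U + hi U V * hs U V * nu lam V = nu lam U"
    and "hi U U * hs V U * nu lam U + hi U V * hs V V * nu lam V = 0"
    and "hi V V * hs U V * nu lam V + hi V U * hs U U * nu lam U = 0"
    and "hi V V * hs V V * nu lam V + hi V U * hs V U * nu lam U = nu lam V"
proof -
  define m where "m = CT lam U (i+1) - CT lam U i"
  have m2: "m \<ge> 2" using m_ge2[OF U srt i r c] by (simp add: m_def)
  have VU: "V \<noteq> U" using swp_ne[OF U i] by (simp add: V_def)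
  have sV: "swp V i (i+1) = U" by (simp add: V_def)
  have rV: "rw lam V i = rw lam U (i+1)" "rw lam V (i+1) = rw lam U i"
    unfolding V_def rw_swp by simp_all
  have cV: "cl lam V i = cl lam U (i+1)" "cl lam V (i+1) = cl lam U i"
    unfolding V_def cl_swp by simp_all
  have CV: "CT lam V i = CT lam U (i+1)" "CT lam V (i+1) = CT lam U i"
    unfolding V_def CT_swp by simp_all
  have hUU: "\<And>q. hcoeff q lam i U U = (q - 1) / (1 - q powi m)"
    using r c by (simp add: hcoeff_def Let_def m_def)
  have hUV: "\<And>q. hcoeff q lam i U V = q * (1 - q powi (m + 1)) * (1 - q powi (m - 1)) / (1 - q powi m)\<^sup>2"
    using r c VU by (simp add: hcoeff_def Let_def m_def V_def)
  have hVV: "\<And>q. hcoeff q lam i V V = q - 1 - (q - 1) / (1 - q powi m)"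
    using r c rV cV CV by (simp add: hcoeff_def Let_def m_def)
  have hVU: "\<And>q. hcoeff q lam i V U = 1"
    using r c rV cV VU sV by (auto simp: hcoeff_def Let_def)
  obtain R where R: "nu lam U = R * fac i (CT lam U)" "nu lam V = R * fac i (\<lambda>a. CT lam U (tau i a))"
    using nu_swap[OF i, of U] unfolding V_def by blast
  have f1: "fac i (CT lam U) = (1 - s_ind powi (m - 1)) * (1 - s_ind powi (m + 1)) / (1 - s_ind powi m)\<^sup>2"
    using m2 by (simp add: fac_def Ff_def m_def)
  have f2: "fac i (\<lambda>a. CT lam U (tau i a)) = 1"
    using m2 by (simp add: fac_def m_def)
  note S = hs_def hi_def hUU hUV hVV hVU R f1 f2
  show "hi U U * hs U U * nu lam U + hi U V * hs U V * nu lam V = nu lam U"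
    unfolding S using alg(1)[OF m2, of R] by simp
  show "hi U U * hs V U * nu lam U + hi U V * hs V V * nu lam V = 0"
    unfolding S using alg(2)[OF m2, of R] by simp
  show "hi V V * hs U V * nu lam V + hi V U * hs U U * nu lam U = 0"
    unfolding S using alg(3)[OF m2, of R] by simp
  show "hi V V * hs V V * nu lam V + hi V U * hs V U * nu lam U = nu lam V"
    unfolding S using alg(4)[OF m2, of R] by simp
qed



lemma sum1: "finite A \<Longrightarrow> x \<in> A \<Longrightarrow> (\<And>y. y \<in> A \<Longrightarrow> y \<noteq> x \<Longrightarrow> f y = 0) \<Longrightarrow> sum f A = f x"
  by (simp add: sum.remove)

lemma sum2: "finite A \<Longrightarrow> x \<in> A \<Longrightarrow> z \<in> A \<Longrightarrow> x \<noteq> z \<Longrightarrow>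
   (\<And>y. y \<in> A \<Longrightarrow> y \<noteq> x \<Longrightarrow> y \<noteq> z \<Longrightarrow> f y = 0) \<Longrightarrow> sum f A = f x + f z"
proof -
  assume a: "finite A" "x \<in> A" "z \<in> A" "x \<noteq> z" "\<And>y. y \<in> A \<Longrightarrow> y \<noteq> x \<Longrightarrow> y \<noteq> z \<Longrightarrow> f y = 0"
  have "sum f A = f x + sum f (A - {x})" using a by (simp add: sum.remove)
  also have "sum f (A - {x}) = f z" using a by (intro sum1) auto
  finally show ?thesis .
qed

lemma gram:
  assumes X: "X \<in> Tab lam" and Y: "Y \<in> Tab lam" and srt: "sorted_wrt (\<ge>) lam"
    and i: "1 \<le> i" "i + 1 \<le> sum_list lam"
  shows "(\<Sum>T'\<in>Tab lam. hcoeff (inverse s_ind) lam i X T' * hcoeff s_ind lam i Y T' * nu lam T')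
         = (if X = Y then nu lam X else 0)"
proof -
  let ?hs = "hcoeff s_ind lam i" and ?hi = "hcoeff (inverse s_ind) lam i"
  let ?f = "\<lambda>T'. ?hi X T' * ?hs Y T' * nu lam T'"
  have fin: "finite (Tab lam)" by (rule Tab_finite)
  show ?thesis
  proof (cases "rw lam X i = rw lam X (i+1) \<or> cl lam X i = cl lam X (i+1)")
    case True
    have "sum ?f (Tab lam) = ?f X"
    proof (rule sum1[OF fin X])
      fix T' assume "T' \<in> Tab lam" "T' \<noteq> X"
      then have "?hi X T' = 0" using hc_supp[of "inverse s_ind" lam i X T'] True by auto
      then show "?f T' = 0" by simp
    qed
    also have "?f X = (if X = Y then nu lam X else 0)"
    proof (cases "X = Y")
      case True
      have "?hi X X * ?hs X X = 1"
        using \<open>rw lam X i = rw lam X (i+1) \<or> cl lam X i = cl lam X (i+1)\<close> s_nz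
        by (auto simp: hcoeff_def)
      then show ?thesis using True by simp
    next
      case False
      have "?hs Y X = 0"
      proof (rule ccontr)
        assume "?hs Y X \<noteq> 0"
        then have "rw lam X i \<noteq> rw lam X (i+1) \<and> cl lam X i \<noteq> cl lam X (i+1)"
          using hc_other[of s_ind lam i Y X] False by auto
        then show False using \<open>rw lam X i = rw lam X (i+1) \<or> cl lam X i = cl lam X (i+1)\<close> by blast
      qed
      then show ?thesis using False by simp
    qed
    finally show ?thesis .
  next
    case False
    define S where "S = swp X i (i+1)"
    have S: "S \<in> Tab lam" using swp_Tab[OF X i] False by (simp add: S_def)
    have SX: "X \<noteq> S" using swp_ne[OF X i] by (simp add: S_def)
    have sS: "swp S i (i+1) = X" by (simp add: S_def)
    have eq: "sum ?f (Tab lam) = ?f X + ?f S"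
    proof (rule sum2[OF fin X S SX])
      fix T' assume "T' \<in> Tab lam" "T' \<noteq> X" "T' \<noteq> S"
      then have "?hi X T' = 0" using hc_supp[of "inverse s_ind" lam i X T'] by (auto simp: S_def)
      then show "?f T' = 0" by simp
    qed
    have zero: "?hs Y X = 0 \<and> ?hs Y S = 0" if "Y \<noteq> X" "Y \<noteq> S"
    proof
      show "?hs Y X = 0"
      proof (rule ccontr)
        assume "?hs Y X \<noteq> 0"
        then have "Y = S" using hc_other[of s_ind lam i Y X] that by (auto simp: S_def)
        then show False using that by simp
      qed
      show "?hs Y S = 0"
      proof (rule ccontr)
        assume "?hs Y S \<noteq> 0"
        then have "Y = swp S i (i+1)" using hc_other[of s_ind lam i Y S] that by auto
        then show False using that sS by simp
      qed
    qed
    show ?thesis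
    proof (cases "Y = X \<or> Y = S")
      case False
      then show ?thesis using eq zero by auto
    next
      case YXS: True
      show ?thesis
      proof (cases "rw lam X i > rw lam X (i+1)")
        case True
        have c: "cl lam X i \<noteq> cl lam X (i+1)" using False by blast
        note g = gram4[OF X srt i True c, folded S_def]
        show ?thesis using YXS eq g(1) g(2) SX by auto
      next
        case rlt: False
        have r2: "rw lam S i > rw lam S (i+1)" "cl lam S i \<noteq> cl lam S (i+1)"
          using rlt False unfolding S_def rw_swp cl_swp by auto
        note g = gram4[OF S srt i r2, unfolded sS]
        show ?thesis using YXS eq g(3) g(4) SX by auto
      qed
    qed
  qed
qed

theorem proposition6p2:
  fixes N :: nat and lam :: "nat list" and P Q :: "tableau \<Rightarrow> ratfun" and i :: nat
  assumes "N \<ge> 2" and "is_partition lam N" and "1 \<le> i" and "i \<le> N - 1"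
  shows "pairing lam (act (inverse s_ind) lam i P) (act s_ind lam i Q) = pairing lam P Q"
proof -
  have srt: "sorted_wrt (\<ge>) lam" and NN: "sum_list lam = N" using assms(2) by (auto simp: is_partition_def)
  have i: "1 \<le> i" "i + 1 \<le> sum_list lam" using assms NN by auto
  let ?A = "Tab lam"
  let ?hs = "hcoeff s_ind lam i" and ?hi = "hcoeff (inverse s_ind) lam i"
  have "pairing lam (act (inverse s_ind) lam i P) (act s_ind lam i Q)
      = (\<Sum>T'\<in>?A. (\<Sum>X\<in>?A. P X * ?hi X T') * (\<Sum>Y\<in>?A. Q Y * ?hs Y T') * nu lam T')"
    by (simp add: pairing_def act_def)
  also have "\<dots> = (\<Sum>T'\<in>?A. \<Sum>X\<in>?A. \<Sum>Y\<in>?A. P X * Q Y * (?hi X T' * ?hs Y T' * nu lam T'))"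
    by (simp add: sum_distrib_left sum_distrib_right mult_ac)
  also have "\<dots> = (\<Sum>X\<in>?A. \<Sum>Y\<in>?A. \<Sum>T'\<in>?A. P X * Q Y * (?hi X T' * ?hs Y T' * nu lam T'))"
    apply (rule trans[OF sum.swap])
    apply (rule sum.cong[OF refl])
    apply (rule sum.swap)
    done
  also have "\<dots> = (\<Sum>X\<in>?A. \<Sum>Y\<in>?A. P X * Q Y * (if X = Y then nu lam X else 0))"
    by (intro sum.cong refl) (simp add: sum_distrib_left[symmetric] gram[OF _ _ srt i])
  also have "\<dots> = (\<Sum>X\<in>?A. P X * Q X * nu lam X)"
    by (intro sum.cong refl) (simp add: if_distrib Tab_finite cong: if_cong)
  also have "\<dots> = pairing lam P Q" by (simp add: pairing_def)
  finally show ?thesis .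
qed


end
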